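(* For $\epsilon\in\mathbb{R}$ let $$\widetilde{\Phi}_{2,\epsilon}(x,y)=\left(\frac{(\epsilon^{2}-1)x+2\epsilon y}{2\epsilon x-2\epsilon^{2}y-\epsilon^{2}-1},\ \frac{-2\epsilon x+(\epsilon^{2}-1)y}{2\epsilon x-2\epsilon^{2}y-\epsilon^{2}-1}\right).$$ Then $\widetilde{\Phi}_{2,\epsilon}$ preserves the fibration defined by the pencil of conics $C_{2,h}=\{x^2+y^2-h(1+y)^2=0\}$. A proper parametrization of each curve $C_{2,h}$ is $$P_{2,h}(t)=\left(-\frac{2(ht-\sqrt{h})}{-1+(h-1)t^{2}}+\sqrt{h},\ -\frac{2t(ht-\sqrt{h})}{-1+(h-1)t^{2}}\right),$$ with inverse $$P_{2,h}^{-1}(x,y)=\frac{\sqrt{h}\,x+(h-1)y+h}{(h-1)x+\sqrt{h}(h-1)y+\sqrt{h}(h+1)}.$$ On each curve $C_{2,h}$, $\widetilde{\Phi}_{2,\epsilon}|_{C_{2,h}}$ is conjugate via $P_{2,h}$ to the M\"obius map $$M_{2,h}(t)=\frac{(1-\epsilon\sqrt{h})t+\epsilon}{-\epsilon(h+1)t+\epsilon\sqrt{h}+1}.$$ For a fixed $\epsilon$, on each closed curve $C_{2,h}$ the map $\widetilde{\Phi}_{2,\epsilon}$ is conjugate to a rotation with constant rotation number $\rho_\epsilon=\frac{1}{2\pi}\arg\left(\frac{1-\epsilon^{2}+2i\epsilon}{1+\epsilon^{2}}\right)$.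
   Context: $\widetilde{\Phi}_{2,\epsilon}$ is the pseudo-KHK map of the vector field $\dot x=-y+x^2$, $\dot y=x(1+y)$. A parametrization $P:\mathbb{R}\to C$ of a curve $C$ by rational functions is proper if it is birational onto $C$ (its inverse is rational). Conjugate via $P_{2,h}$ means $M_{2,h}=P_{2,h}^{-1}\circ\widetilde{\Phi}_{2,\epsilon}|_{C_{2,h}}\circ P_{2,h}$. $\arg$ takes values in $[0,2\pi)$. *)

theory Defs
  imports "HOL-Complex_Analysis.Complex_Analysis"
begin

definition Phi2_den :: "real \<Rightarrow> real \<times> real \<Rightarrow> real" where
  "Phi2_den e p = (case p of (x, y) \<Rightarrow> 2*e*x - 2*e^2*y - e^2 - 1)"

definition Phi2 :: "real \<Rightarrow> real \<times> real \<Rightarrow> real \<times> real" where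
  "Phi2 e p = (case p of (x, y) \<Rightarrow>
     (((e^2 - 1)*x + 2*e*y) / Phi2_den e (x, y),
      (-2*e*x + (e^2 - 1)*y) / Phi2_den e (x, y)))"

definition C2 :: "real \<Rightarrow> (real \<times> real) set" where
  "C2 h = {(x, y). x^2 + y^2 - h*(1 + y)^2 = 0}"

definition P2_den :: "real \<Rightarrow> real \<Rightarrow> real" where
  "P2_den h t = -1 + (h - 1)*t^2"

definition P2 :: "real \<Rightarrow> real \<Rightarrow> real \<times> real" where
  "P2 h t = (- (2*(h*t - sqrt h)) / P2_den h t + sqrt h,
             - (2*t*(h*t - sqrt h)) / P2_den h t)"

definition P2inv_den :: "real \<Rightarrow> real \<times> real \<Rightarrow> real" where
  "P2inv_den h p = (case p of (x, y) \<Rightarrow> (h - 1)*x + sqrt h*(h - 1)*y + sqrt h*(h + 1))"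

definition P2inv :: "real \<Rightarrow> real \<times> real \<Rightarrow> real" where
  "P2inv h p = (case p of (x, y) \<Rightarrow> (sqrt h*x + (h - 1)*y + h) / P2inv_den h (x, y))"

definition M2 :: "real \<Rightarrow> real \<Rightarrow> real \<Rightarrow> real" where
  "M2 e h t = ((1 - e * sqrt h)*t + e) / (-e*(h + 1)*t + e * sqrt h + 1)"

text \<open>Argument with values in \<open>[0, 2\<pi>)\<close> (library \<open>Arg\<close> takes values in \<open>(-\<pi>, \<pi>]\<close>).\<close>
definition arg0 :: "complex \<Rightarrow> real" where
  "arg0 z = (if Arg z < 0 then Arg z + 2*pi else Arg z)"

definition rho2 :: "real \<Rightarrow> real" where
  "rho2 e = arg0 (Complex ((1 - e^2) / (1 + e^2)) (2*e / (1 + e^2))) / (2*pi)"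

definition cpt :: "real \<times> real \<Rightarrow> complex" where
  "cpt p = Complex (fst p) (snd p)"

end

theory Submission
  imports Defs
begin

lemma quad_finite:
  fixes a b c :: real
  assumes "a \<noteq> 0 \<or> b \<noteq> 0 \<or> c \<noteq> 0"
  shows "finite {t. a + b * t + c * t^2 = 0}"
proof -
  have "[:a,b,c:] \<noteq> 0" using assms by auto
  hence "finite {t. poly [:a,b,c:] t = 0}" by (rule poly_roots_finite)
  moreover have "{t. a + b * t + c * t^2 = 0} = {t. poly [:a,b,c:] t = 0}"
    by (auto simp: algebra_simps power2_eq_square)
  ultimately show ?thesis by simp
qed

lemma P2inv_den_hom: "d \<noteq> 0 \<Longrightarrow> P2inv_den h (a/d, b/d) =
   ((h-1) * a + sqrt h * (h-1) * b + sqrt h * (h+1) * d) / d"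
  unfolding P2inv_den_def by (simp add: field_simps)

lemma P2inv_hom:
  assumes "d \<noteq> 0"
  shows "P2inv h (a/d, b/d) =
   (sqrt h * a + (h-1) * b + h * d) / ((h-1) * a + sqrt h * (h-1) * b + sqrt h * (h+1) * d)"
proof -
  have 1: "sqrt h * (a/d) + (h-1) * (b/d) + h = (sqrt h * a + (h-1) * b + h * d) / d"
    using assms by (simp add: field_simps)
  show ?thesis unfolding P2inv_def
    by (simp only: prod.case 1 P2inv_den_hom[OF assms]) (simp add: assms)
qed

lemma Phi2_den_hom: "d \<noteq> 0 \<Longrightarrow> Phi2_den e (a/d, b/d) =
   (2 * e * a - 2 * e^2 * b - (e^2 + 1) * d) / d"
  unfolding Phi2_den_def by (simp add: field_simps)

lemma Phi2_hom:
  assumes "d \<noteq> 0" "2 * e * a - 2 * e^2 * b - (e^2 + 1) * d \<noteq> 0"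
  shows "Phi2 e (a/d, b/d) =
   (((e^2 - 1) * a + 2 * e * b) / (2 * e * a - 2 * e^2 * b - (e^2 + 1) * d),
    (-2 * e * a + (e^2 - 1) * b) / (2 * e * a - 2 * e^2 * b - (e^2 + 1) * d))"
proof -
  have 1: "(e^2 - 1) * (a/d) + 2 * e * (b/d) = ((e^2 - 1) * a + 2 * e * b) / d"
    using assms by (simp add: field_simps)
  have 2: "-2 * e * (a/d) + (e^2 - 1) * (b/d) = (-2 * e * a + (e^2 - 1) * b) / d"
    using assms by (simp add: field_simps)
  show ?thesis unfolding Phi2_def using assms
    by (simp only: prod.case 1 2 Phi2_den_hom[OF assms(1)]) simp
qed

lemma C2_hom: "d \<noteq> 0 \<Longrightarrow> (a/d, b/d) \<in> C2 h \<longleftrightarrow> a^2 + b^2 - h * (d + b)^2 = 0"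
  unfolding C2_def by (simp add: field_simps power2_eq_square)

lemma P2_eq:
  assumes "s > 0" "P2_den (s^2) t \<noteq> 0"
  shows "P2 (s^2) t = ((s * (s^2-1) * t^2 - 2 * s^2 * t + s) / P2_den (s^2) t,
                       (-2 * s^2 * t^2 + 2 * s * t) / P2_den (s^2) t)"
  using assms unfolding P2_def
  by (simp add: field_simps P2_den_def power2_eq_square)

lemma P2inv_den_P2:
  assumes "s > 0" "P2_den (s^2) t \<noteq> 0"
  shows "P2inv_den (s^2) (P2 (s^2) t) = -2 * s / P2_den (s^2) t"
  unfolding P2_eq[OF assms] P2inv_den_hom[OF assms(2)] using assms(1)
  by (simp add: P2_den_def algebra_simps power2_eq_square)

lemma P2inv_P2:
  assumes "s > 0" "P2_den (s^2) t \<noteq> 0"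
  shows "P2inv (s^2) (P2 (s^2) t) = t"
proof -
  have "P2inv (s^2) (P2 (s^2) t) = (-2 * s * t) / (-2 * s)"
    unfolding P2_eq[OF assms] P2inv_hom[OF assms(2)] using assms(1)
    by (simp add: P2_den_def algebra_simps power2_eq_square)
  thus ?thesis using assms by simp
qed

lemma P2_C2:
  assumes "s > 0" "P2_den (s^2) t \<noteq> 0"
  shows "P2 (s^2) t \<in> C2 (s^2)"
  unfolding P2_eq[OF assms] C2_hom[OF assms(2)] 
  by (simp add: P2_den_def algebra_simps power2_eq_square)


lemma C2_iff: "(x, y) \<in> C2 h \<longleftrightarrow> x^2 + y^2 - h * (1 + y)^2 = 0"
  unfolding C2_def by simp

lemma part1:
  assumes "p \<in> C2 h" "Phi2_den e p \<noteq> 0"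
  shows "Phi2 e p \<in> C2 h"
proof -
  obtain x y where p: "p = (x, y)" by (cases p)
  have c: "x^2 + y^2 - h * (1 + y)^2 = 0" using assms(1) p C2_iff by simp
  define D where "D = Phi2_den e (x, y)"
  have D: "D = 2 * e * x - 2 * e^2 * y - e^2 - 1" unfolding D_def Phi2_den_def by simp
  have "Phi2 e p = (((e^2 - 1) * x + 2 * e * y) / D, (-2 * e * x + (e^2 - 1) * y) / D)"
    unfolding p Phi2_def D_def by simp
  moreover have "((e^2 - 1) * x + 2 * e * y)^2 + (-2 * e * x + (e^2 - 1) * y)^2
      - h * (D + (-2 * e * x + (e^2 - 1) * y))^2 = (1 + e^2)^2 * (x^2 + y^2 - h * (1 + y)^2)"
    unfolding D by (simp add: algebra_simps power2_eq_square)
  ultimately show ?thesis using C2_hom[of D] assms(2) c unfolding p D_def by simp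
qed

lemma Dq:
  fixes s x y :: real
  defines "h \<equiv> s^2"
  defines "N \<equiv> s * x + (h-1) * y + h"
  defines "D \<equiv> (h-1) * x + s * (h-1) * y + s * (h+1)"
  shows "(h-1) * N^2 - D^2 = (h-1) * (x^2 + y^2 - h * (1 + y)^2) - 2 * s * D"
    and "s * ((h-1) * N^2 - 2 * s * N * D + D^2) - x * ((h-1) * N^2 - D^2)
          = ((1-h) * x + s * (h-1)) * (x^2 + y^2 - h * (1 + y)^2)"
    and "-2 * N * (h * N - s * D) - y * ((h-1) * N^2 - D^2)
          = ((1-h) * y - 2 * h) * (x^2 + y^2 - h * (1 + y)^2)"
    and "(h-1)^2 * (x^2 + y^2 - h * (1 + y)^2) =
          D * ((h-1) * x - s * ((h-1) * y + h + 1)) + ((h-1) * y + 2 * h)^2"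
  unfolding h_def N_def D_def by (simp_all add: algebra_simps power2_eq_square)


lemma item5:
  assumes s: "s > 0" and c: "(x, y) \<in> C2 (s^2)" and D0: "P2inv_den (s^2) (x, y) \<noteq> 0"
  shows "P2_den (s^2) (P2inv (s^2) (x, y)) \<noteq> 0 \<and> P2 (s^2) (P2inv (s^2) (x, y)) = (x, y)"
proof -
  define h where "h = s^2"
  define N where "N = s * x + (h-1) * y + h"
  define D where "D = (h-1) * x + s * (h-1) * y + s * (h+1)"
  have sq: "sqrt (s^2) = s" using s by simp
  have DD: "P2inv_den (s^2) (x, y) = D" unfolding P2inv_den_def D_def h_def sq by simp
  have D0': "D \<noteq> 0" using D0 DD by simp
  have cc: "x^2 + y^2 - h * (1 + y)^2 = 0" using c C2_iff h_def by simp
  have inv: "P2inv (s^2) (x, y) = N / D"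
    by (simp only: P2inv_def prod.case DD) (simp add: N_def h_def sq abs_of_pos[OF s])
  have q: "(h-1) * N^2 - D^2 = - 2 * s * D" using Dq(1)[of s x y] cc
    unfolding N_def D_def h_def by simp
  have qx: "s * ((h-1) * N^2 - 2 * s * N * D + D^2) = x * ((h-1) * N^2 - D^2)"
    using Dq(2)[of s x y] cc unfolding N_def D_def h_def by simp
  have qy: "-2 * N * (h * N - s * D) = y * ((h-1) * N^2 - D^2)"
    using Dq(3)[of s x y] cc unfolding N_def D_def h_def by simp
  have dval: "P2_den (s^2) (N / D) = ((h-1) * N^2 - D^2) / D^2"
    unfolding P2_den_def h_def using D0' by (simp add: field_simps)
  have dnz: "P2_den (s^2) (N / D) \<noteq> 0" unfolding dval q using D0' s by simp
  have "P2 (s^2) (N / D) = (x, y)"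
  proof -
    have e1: "s * (s^2-1) * (N/D)^2 - 2 * s^2 * (N/D) + s = s * ((h-1) * N^2 - 2 * s * N * D + D^2) / D^2"
      unfolding h_def using D0' by (simp add: field_simps power2_eq_square)
    have e2: "-2 * s^2 * (N/D)^2 + 2 * s * (N/D) = -2 * N * (h * N - s * D) / D^2"
      unfolding h_def using D0' by (simp add: field_simps power2_eq_square)
    have qnz: "(h-1) * N^2 - D^2 \<noteq> 0" unfolding q using D0' s by simp
    show ?thesis unfolding P2_eq[OF s dnz] e1 e2 dval qx qy using D0' qnz by simp
  qed
  thus ?thesis using dnz inv by simp
qed

lemma set4:
  assumes s: "s > 0"
  shows "{p \<in> C2 (s^2). P2inv_den (s^2) p = 0 \<or> P2_den (s^2) (P2inv (s^2) p) = 0}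
     \<subseteq> {(s, -2 * s^2 / (s^2 - 1))}"
proof
  fix p assume p: "p \<in> {p \<in> C2 (s^2). P2inv_den (s^2) p = 0 \<or> P2_den (s^2) (P2inv (s^2) p) = 0}"
  obtain x y where xy: "p = (x, y)" by (cases p)
  have c: "(x, y) \<in> C2 (s^2)" using p xy by simp
  have D0: "P2inv_den (s^2) (x, y) = 0" using item5[OF s c] p xy by auto
  define h where "h = s^2"
  define D where "D = (h-1) * x + s * (h-1) * y + s * (h+1)"
  have sq: "sqrt (s^2) = s" using s by simp
  have DD: "D = 0" using D0 unfolding P2inv_den_def D_def h_def sq by simp
  have cc: "x^2 + y^2 - h * (1 + y)^2 = 0" using c C2_iff h_def by simp
  have h1: "h \<noteq> 1"
  proof
    assume "h = 1" thus False using DD s unfolding D_def by simp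
  qed
  have "((h-1) * y + 2 * h)^2 = 0" using Dq(4)[of s x y] cc DD unfolding D_def h_def by simp
  hence yv: "(h-1) * y = - 2 * h" by simp
  hence "y = -2 * h / (h - 1)" using h1 by (simp add: field_simps)
  moreover have "(h-1) * x = -s * ((h-1) * y) - s * (h+1)"
    using DD unfolding D_def by (simp add: algebra_simps)
  hence "(h-1) * x = (h-1) * s" unfolding yv by (simp add: algebra_simps)
  hence "x = s" using h1 by simp
  ultimately show "p \<in> {(s, -2 * s^2 / (s^2 - 1))}" using xy h_def by simp
qed


lemma part3:
  assumes s: "s > 0"
  shows "finite {t. P2_den (s^2) t = 0 \<or> Phi2_den e (P2 (s^2) t) = 0
                   \<or> P2inv_den (s^2) (Phi2 e (P2 (s^2) t)) = 0}"
    and "\<forall>t. P2_den (s^2) t \<noteq> 0 \<and> Phi2_den e (P2 (s^2) t) \<noteq> 0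
              \<and> P2inv_den (s^2) (Phi2 e (P2 (s^2) t)) \<noteq> 0
            \<longrightarrow> P2inv (s^2) (Phi2 e (P2 (s^2) t)) = M2 e (s^2) t"
proof -
  have sq: "sqrt (s^2) = s" using s by simp
  define Xn where "Xn = (\<lambda>t::real. s * (s^2-1) * t^2 - 2 * s^2 * t + s)"
  define Yn where "Yn = (\<lambda>t::real. -2 * s^2 * t^2 + 2 * s * t)"
  define dd where "dd = (\<lambda>t::real. P2_den (s^2) t)"
  define Zt where "Zt = (\<lambda>t. 2 * e * Xn t - 2 * e^2 * Yn t - (e^2 + 1) * dd t)"
  define Xt where "Xt = (\<lambda>t. (e^2 - 1) * Xn t + 2 * e * Yn t)"
  define Yt where "Yt = (\<lambda>t. -2 * e * Xn t + (e^2 - 1) * Yn t)"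
  define Dt where "Dt = (\<lambda>t. (s^2-1) * Xt t + s * (s^2-1) * Yt t + s * (s^2+1) * Zt t)"
  define Nt where "Nt = (\<lambda>t. s * Xt t + (s^2-1) * Yt t + s^2 * Zt t)"
  define m1 where "m1 = (\<lambda>t. (1 - e * s) * t + e)"
  define m2 where "m2 = (\<lambda>t. -e * (s^2 + 1) * t + e * s + 1)"
  have ddf: "dd t = -1 + 0 * t + (s^2 - 1) * t^2" for t unfolding dd_def P2_den_def by simp
  have Ztf: "Zt t = (2 * s * e + e^2 + 1) + (-4 * s^2 * e - 4 * s * e^2) * t
        + (2 * s^3 * e + 3 * s^2 * e^2 - s^2 - 2 * s * e + e^2 + 1) * t^2" for t
    unfolding Zt_def Xn_def Yn_def dd_def P2_den_def by algebra
  have Dtf: "Dt t = (2 * s^3 * e^2 + 4 * s^2 * e + 2 * s) + (-4 * s^4 * e^2 - 4 * s^3 * e - 4 * s^2 * e^2 - 4 * s * e) * t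
        + (2 * s^5 * e^2 + 4 * s^3 * e^2 + 2 * s * e^2) * t^2" for t
    unfolding Dt_def Xt_def Yt_def Zt_def Xn_def Yn_def dd_def P2_den_def
    by algebra
  have ident: "Nt t * m2 t = Dt t * m1 t" for t
    unfolding Nt_def Dt_def Xt_def Yt_def Zt_def Xn_def Yn_def dd_def P2_den_def m1_def m2_def
    by algebra
  have P2e: "P2 (s^2) t = (Xn t / dd t, Yn t / dd t)" if "dd t \<noteq> 0" for t
    using P2_eq[OF s] that unfolding Xn_def Yn_def dd_def by simp
  have Phd: "Phi2_den e (P2 (s^2) t) = Zt t / dd t" if "dd t \<noteq> 0" for t
    unfolding P2e[OF that] Phi2_den_hom[OF that] Zt_def by simp
  have Phe: "Phi2 e (P2 (s^2) t) = (Xt t / Zt t, Yt t / Zt t)" if "dd t \<noteq> 0" "Zt t \<noteq> 0" for t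
    unfolding P2e[OF that(1)] using Phi2_hom[OF that(1), of e "Xn t" "Yn t"] that(2)
    unfolding Zt_def Xt_def Yt_def by simp
  have Pid: "P2inv_den (s^2) (Phi2 e (P2 (s^2) t)) = Dt t / Zt t" if "dd t \<noteq> 0" "Zt t \<noteq> 0" for t
    unfolding Phe[OF that] P2inv_den_hom[OF that(2)] Dt_def sq by simp
  have Pie: "P2inv (s^2) (Phi2 e (P2 (s^2) t)) = Nt t / Dt t" if "dd t \<noteq> 0" "Zt t \<noteq> 0" for t
    unfolding Phe[OF that] P2inv_hom[OF that(2)] Dt_def Nt_def sq by simp
  have sub: "{t. P2_den (s^2) t = 0 \<or> Phi2_den e (P2 (s^2) t) = 0
                   \<or> P2inv_den (s^2) (Phi2 e (P2 (s^2) t)) = 0}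
        \<subseteq> {t. dd t = 0} \<union> {t. Zt t = 0} \<union> {t. Dt t = 0}"
  proof
    fix t assume t: "t \<in> {t. P2_den (s^2) t = 0 \<or> Phi2_den e (P2 (s^2) t) = 0
                   \<or> P2inv_den (s^2) (Phi2 e (P2 (s^2) t)) = 0}"
    show "t \<in> {t. dd t = 0} \<union> {t. Zt t = 0} \<union> {t. Dt t = 0}"
    proof (cases "dd t = 0 \<or> Zt t = 0")
      case True thus ?thesis by auto
    next
      case False
      hence "dd t \<noteq> 0" "Zt t \<noteq> 0" by auto
      thus ?thesis using t Phd[of t] Pid[of t] unfolding dd_def by auto
    qed
  qed
  have f1: "finite {t. dd t = 0}" unfolding ddf by (rule quad_finite) simp
  have f2: "finite {t. Zt t = 0}" unfolding Ztf
  proof (rule quad_finite)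
    show "2 * s * e + e^2 + 1 \<noteq> 0 \<or> -4 * s^2 * e - 4 * s * e^2 \<noteq> 0 \<or>
          2 * s^3 * e + 3 * s^2 * e^2 - s^2 - 2 * s * e + e^2 + 1 \<noteq> 0"
    proof (cases "e = 0")
      case True thus ?thesis by simp
    next
      case False
      show ?thesis
      proof (cases "e = -s")
        case True
        have "2 * s^3 * e + 3 * s^2 * e^2 - s^2 - 2 * s * e + e^2 + 1 = s^4 + 2 * s^2 + 1"
          unfolding True by algebra
        moreover have "s^4 + 2 * s^2 + 1 = (s^2 + 1)^2" by algebra
        moreover have "(s^2+1)^2 > 0"
          by (intro zero_less_power add_nonneg_pos zero_le_power2 zero_less_one)
        ultimately show ?thesis by (metis less_irrefl)
      next
        case ne: False
        have "-4 * s^2 * e - 4 * s * e^2 = -4 * s * e * (s + e)" by algebra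
        moreover have "s + e \<noteq> 0" using ne by auto
        moreover have "-4 * s * e * (s + e) \<noteq> 0" using ne False s by simp
        ultimately show ?thesis by metis
      qed
    qed
  qed
  have f3: "finite {t. Dt t = 0}" unfolding Dtf
  proof (rule quad_finite)
    show "2 * s^3 * e^2 + 4 * s^2 * e + 2 * s \<noteq> 0 \<or> -4 * s^4 * e^2 - 4 * s^3 * e - 4 * s^2 * e^2 - 4 * s * e \<noteq> 0 \<or>
          2 * s^5 * e^2 + 4 * s^3 * e^2 + 2 * s * e^2 \<noteq> 0"
    proof (cases "e = 0")
      case True thus ?thesis using s by simp
    next
      case False
      have "2 * s^5 * e^2 + 4 * s^3 * e^2 + 2 * s * e^2 = 2 * s * e^2 * (s^2+1)^2"
        by algebra
      moreover have "(s^2+1)^2 > 0"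
          by (intro zero_less_power add_nonneg_pos zero_le_power2 zero_less_one)
      moreover have "2 * s * e^2 * (s^2+1)^2 \<noteq> 0" using False s calculation(2) by simp
      ultimately show ?thesis by (metis less_irrefl)
    qed
  qed
  show "finite {t. P2_den (s^2) t = 0 \<or> Phi2_den e (P2 (s^2) t) = 0
                   \<or> P2inv_den (s^2) (Phi2 e (P2 (s^2) t)) = 0}"
    by (rule finite_subset[OF sub]) (simp add: f1 f2 f3)
  show "\<forall>t. P2_den (s^2) t \<noteq> 0 \<and> Phi2_den e (P2 (s^2) t) \<noteq> 0
              \<and> P2inv_den (s^2) (Phi2 e (P2 (s^2) t)) \<noteq> 0
            \<longrightarrow> P2inv (s^2) (Phi2 e (P2 (s^2) t)) = M2 e (s^2) t"
  proof (intro allI impI)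
    fix t assume a: "P2_den (s^2) t \<noteq> 0 \<and> Phi2_den e (P2 (s^2) t) \<noteq> 0
              \<and> P2inv_den (s^2) (Phi2 e (P2 (s^2) t)) \<noteq> 0"
    have d0: "dd t \<noteq> 0" using a dd_def by simp
    have z0: "Zt t \<noteq> 0" using a Phd[OF d0] by auto
    have D0: "Dt t \<noteq> 0" using a Pid[OF d0 z0] by auto
    have det: "(1 - e * s) * m2 t + e * (s^2 + 1) * m1 t = 1 + e^2"
      unfolding m1_def m2_def by (simp add: algebra_simps power2_eq_square)
    have m20: "m2 t \<noteq> 0"
    proof
      assume "m2 t = 0"
      hence "m1 t = 0" using ident[of t] D0 by simp
      moreover have "1 + e^2 > 0" by (intro add_pos_nonneg zero_less_one zero_le_power2)
      ultimately show False using \<open>m2 t = 0\<close> det by simp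
    qed
    have "M2 e (s^2) t = m1 t / m2 t" unfolding M2_def m1_def m2_def sq by simp
    also have "\<dots> = Nt t / Dt t" unfolding frac_eq_eq[OF m20 D0] using ident[of t] by (simp add: mult.commute)
    finally show "P2inv (s^2) (Phi2 e (P2 (s^2) t)) = M2 e (s^2) t"
      using Pie[OF d0 z0] by simp
  qed
qed


lemma C2_facts:
  assumes h: "0 < h" "h < 1" and c: "(x, y) \<in> C2 h"
  shows "1 + 2 * y - x^2 > 0" "1 + y > 0" "cmod (Complex x y) = sqrt h * (1 + y)"
    "1 + e^2 - 2 * e * x + 2 * e^2 * y > 0"
proof -
  have cc: "x^2 + y^2 = h * (1 + y)^2" using c C2_iff by simp
  have "y \<noteq> -1"
  proof
    assume "y = -1"
    hence "x^2 + 1 = 0" using cc by simp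
    moreover have "x^2 \<ge> 0" by simp
    ultimately show False by linarith
  qed
  hence p: "(1 + y)^2 > 0" by simp
  have "1 + 2 * y - x^2 = (1 - h) * (1 + y)^2" using cc by algebra
  also have "\<dots> > 0" using p h by simp
  finally show a: "1 + 2 * y - x^2 > 0" .
  have "x^2 \<ge> 0" by simp
  hence a': "1 + 2 * y > 0" using a by linarith
  thus "1 + y > 0" by linarith
  have "cmod (Complex x y) = sqrt (x^2 + y^2)" by (simp add: complex_norm)
  also have "\<dots> = sqrt (h * (1 + y)^2)" using cc by simp
  also have "\<dots> = sqrt h * (1 + y)" using \<open>1 + y > 0\<close> by (simp add: real_sqrt_mult)
  finally show "cmod (Complex x y) = sqrt h * (1 + y)" .
  have "(1 + e^2 - 2 * e * x + 2 * e^2 * y) * (1 + 2 * y) = ((1 + 2 * y) * e - x)^2 + (1 + 2 * y - x^2)"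
    by algebra
  also have "\<dots> > 0" using a by (simp add: add_nonneg_pos)
  finally show "1 + e^2 - 2 * e * x + 2 * e^2 * y > 0" using a' by (simp add: zero_less_mult_iff)
qed

lemma cpt_in: "z \<in> cpt ` S \<longleftrightarrow> (Re z, Im z) \<in> S"
  unfolding cpt_def by (auto simp: image_iff intro!: bexI[of _ "(Re z, Im z)"])

lemma exp_rho: "exp (2 * pi * \<i> * complex_of_real (rho2 e)) = sgn (Complex (1 - e^2) (2 * e))"
proof -
  define w0 where "w0 = Complex (1 - e^2) (2 * e)"
  define w where "w = Complex ((1 - e^2) / (1 + e^2)) (2 * e / (1 + e^2))"
  have pos: "1 + e^2 > 0" by (intro add_pos_nonneg zero_less_one zero_le_power2)
  have ww: "w = complex_of_real (1 / (1 + e^2)) * w0"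
    unfolding w_def w0_def by (simp add: complex_eq_iff)
  have w0nz: "w0 \<noteq> 0"
  proof
    assume "w0 = 0"
    hence "Re w0 = 0" "Im w0 = 0" by simp_all
    hence "1 - e^2 = 0" "2 * e = 0" unfolding w0_def by simp_all
    hence "e = 0" by simp
    with \<open>1 - e^2 = 0\<close> show False by simp
  qed
  have wnz: "w \<noteq> 0" using w0nz pos unfolding ww by (simp only: mult_eq_0_iff of_real_eq_0_iff) simp
  have e1: "2 * pi * \<i> * complex_of_real (rho2 e) = \<i> * complex_of_real (arg0 w)"
    unfolding rho2_def w_def by (simp add: field_simps)
  have "exp (2 * pi * \<i> * complex_of_real (rho2 e)) = cis (arg0 w)"
    by (simp only: e1 cis_conv_exp)
  also have "\<dots> = cis (Arg w)"
  proof (cases "Arg w < 0")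
    case True
    have "cis (Arg w + 2 * pi) = cis (Arg w)"
      by (simp add: cis.ctr complex_eq_iff)
    thus ?thesis unfolding arg0_def using True by simp
  qed (simp add: arg0_def)
  also have "\<dots> = sgn w" using wnz by (rule cis_Arg)
  also have "\<dots> = sgn w0"
  proof -
    have "1 / (1 + e^2) > 0" using pos by simp
    hence "sgn (complex_of_real (1 / (1 + e^2))) = 1" by (simp only: sgn_of_real) simp
    thus ?thesis unfolding ww sgn_mult by simp
  qed
  finally show ?thesis unfolding w0_def .
qed


lemma seg_sgn:
  fixes z :: complex
  assumes "z \<noteq> 0"
  shows "closed_segment z (sgn z) \<subseteq> - {0}"
proof
  fix w assume "w \<in> closed_segment z (sgn z)"
  then obtain u where u: "0 \<le> u" "u \<le> 1" "w = (1 - u) *\<^sub>R z + u *\<^sub>R sgn z"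
    unfolding closed_segment_def by auto
  have r: "cmod z > 0" using assms by simp
  have "w = ((1 - u) + u / cmod z) *\<^sub>R z" unfolding u(3) sgn_div_norm
    by (simp add: scaleR_add_left divide_inverse_commute)
  moreover have "(1 - u) + u / cmod z > 0"
  proof (cases "u = 1")
    case True thus ?thesis using r by simp
  next
    case False thus ?thesis using u r by (simp add: add_pos_nonneg)
  qed
  ultimately show "w \<in> - {0}" using assms by simp
qed

lemma winding_sgn:
  fixes \<gamma> :: "real \<Rightarrow> complex"
  assumes "path \<gamma>" "pathfinish \<gamma> = pathstart \<gamma>" "0 \<notin> path_image \<gamma>"
  shows "winding_number (sgn \<circ> \<gamma>) 0 = winding_number \<gamma> 0"
proof -
  have nz: "\<forall>t\<in>{0..1}. \<gamma> t \<noteq> 0" using assms(3) unfolding path_image_def by auto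
  have "continuous_on {0..1} (\<lambda>t. sgn (\<gamma> t))"
    using assms(1) nz unfolding path_def by (intro continuous_on_sgn) auto
  hence p: "path (sgn \<circ> \<gamma>)" unfolding path_def o_def .
  have "homotopic_loops (- {0}) \<gamma> (sgn \<circ> \<gamma>)"
  proof (rule homotopic_loops_linear)
    show "pathfinish (sgn \<circ> \<gamma>) = pathstart (sgn \<circ> \<gamma>)"
      using assms(2) unfolding pathfinish_def pathstart_def by simp
    fix t :: real assume "t \<in> {0..1}"
    thus "closed_segment (\<gamma> t) ((sgn \<circ> \<gamma>) t) \<subseteq> - {0}" using nz seg_sgn by simp
  qed (use assms p in auto)
  thus ?thesis by (simp add: winding_number_homotopic_loops)
qed


lemma part4:
  assumes h: "0 < h" "h < 1"
  shows "(\<forall>p \<in> C2 h. Phi2_den e p \<noteq> 0)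
     \<and> (\<exists>\<psi> \<psi>'. homeomorphism (cpt ` C2 h) (sphere (0::complex) 1) \<psi> \<psi>'
          \<and> (\<forall>p \<in> C2 h. \<psi> (cpt (Phi2 e p)) = exp (2 * pi * \<i> * complex_of_real (rho2 e)) * \<psi> (cpt p))
          \<and> (\<forall>\<gamma>. path \<gamma> \<and> pathfinish \<gamma> = pathstart \<gamma> \<and> path_image \<gamma> \<subseteq> cpt ` C2 h
                \<longrightarrow> winding_number (\<psi> \<circ> \<gamma>) 0 = winding_number \<gamma> 0))"
proof -
  define s where "s = sqrt h"
  have s: "0 < s" "s < 1" using h unfolding s_def by auto
  define S where "S = cpt ` C2 h"
  have Sm: "z \<in> S \<longleftrightarrow> (Re z, Im z) \<in> C2 h" for z unfolding S_def cpt_in ..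
  have Sf: "z \<noteq> 0 \<and> 1 + Im z > 0 \<and> cmod z = s * (1 + Im z)" if "z \<in> S" for z
  proof -
    have c: "(Re z, Im z) \<in> C2 h" using that Sm by simp
    have "cmod z = s * (1 + Im z)" using C2_facts(3)[OF h c] unfolding s_def by simp
    moreover have "1 + Im z > 0" using C2_facts(2)[OF h c] .
    ultimately show ?thesis using s by auto
  qed
  define g where "g = (\<lambda>u::complex. complex_of_real (s / (1 - s * Im u)) * u)"
  have den: "1 - s * Im u > 0" if "u \<in> sphere 0 1" for u
  proof -
    have "\<bar>Im u\<bar> \<le> 1" using abs_Im_le_cmod[of u] that by simp
    hence "Im u \<le> 1" by linarith
    hence "s * Im u \<le> s * 1" using s by (intro mult_left_mono) auto
    thus ?thesis using s by linarith
  qed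
  have gf: "g (sgn z) = z" if "z \<in> S" for z
  proof -
    define r where "r = cmod z"
    have r: "r > 0" "r = s * (1 + Im z)" using Sf[OF that] s unfolding r_def by auto
    have im: "Im (sgn z) = Im z / r" unfolding r_def by (simp add: sgn_div_norm divide_inverse_commute)
    have "1 - s * (Im z / r) = s / r" using r by (simp add: field_simps)
    hence c: "s / (1 - s * Im (sgn z)) = r" unfolding im using r s by simp
    have "sgn z = complex_of_real (inverse r) * z" unfolding r_def sgn_div_norm scaleR_conv_of_real ..
    hence "g (sgn z) = complex_of_real r * (complex_of_real (inverse r) * z)"
      unfolding g_def c by simp
    also have "\<dots> = complex_of_real (r * inverse r) * z" by simp
    also have "r * inverse r = 1" using r(1) by simp
    finally show ?thesis by simp
  qed
  have fg: "sgn (g u) = u" if "u \<in> sphere 0 1" for u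
  proof -
    define c where "c = s / (1 - s * Im u)"
    have "c > 0" using den[OF that] s unfolding c_def by simp
    hence "sgn (complex_of_real c) = 1" by (simp add: sgn_of_real)
    hence "sgn (complex_of_real (s / (1 - s * Im u))) = 1" unfolding c_def .
    moreover have "sgn u = u" using that by (simp add: sgn_div_norm)
    ultimately show ?thesis unfolding g_def sgn_mult by simp
  qed
  have gS: "g u \<in> S" if "u \<in> sphere 0 1" for u
  proof -
    define c where "c = s / (1 - s * Im u)"
    have d: "1 - s * Im u > 0" using den[OF that] .
    have c1: "c = s * (1 + c * Im u)" unfolding c_def using d by (simp add: field_simps)
    have u1: "(Re u)^2 + (Im u)^2 = 1" using that cmod_power2[of u] by simp
    have "(c * Re u)^2 + (c * Im u)^2 = c^2 * ((Re u)^2 + (Im u)^2)" by algebra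
    also have "\<dots> = c^2" using u1 by simp
    also have "\<dots> = h * (1 + c * Im u)^2" using c1 h unfolding s_def
      by (metis power_mult_distrib real_sqrt_pow2 less_imp_le)
    finally have "(c * Re u)^2 + (c * Im u)^2 - h * (1 + c * Im u)^2 = 0" by simp
    thus ?thesis unfolding Sm g_def c_def[symmetric] C2_iff by simp
  qed
  have fS: "sgn z \<in> sphere 0 1" if "z \<in> S" for z using Sf[OF that] by (simp add: norm_sgn)
  have hom: "homeomorphism S (sphere 0 1) sgn g"
    unfolding homeomorphism_def
  proof (intro conjI ballI)
    show "sgn ` S = sphere 0 1"
    proof
      show "sgn ` S \<subseteq> sphere 0 1" using fS by auto
      show "sphere 0 1 \<subseteq> sgn ` S"
      proof
        fix u :: complex assume "u \<in> sphere 0 1"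
        thus "u \<in> sgn ` S" using fg gS by (metis image_eqI)
      qed
    qed
    show "g ` sphere 0 1 = S"
    proof
      show "g ` sphere 0 1 \<subseteq> S" using gS by auto
      show "S \<subseteq> g ` sphere 0 1"
      proof
        fix z assume "z \<in> S"
        thus "z \<in> g ` sphere 0 1" using gf fS by (metis image_eqI)
      qed
    qed
    show "continuous_on S sgn"
      using continuous_on_sgn[OF continuous_on_id, of S] Sf by (simp add: id_def)
    show "continuous_on (sphere 0 1) g"
      unfolding g_def using den by (intro continuous_intros) force+
  qed (use gf fg in auto)
  have D: "Phi2_den e p \<noteq> 0 \<and> cpt (Phi2 e p) =
     complex_of_real (1 / (1 + e^2 - 2 * e * fst p + 2 * e^2 * snd p)) * (Complex (1 - e^2) (2 * e) * cpt p)
     \<and> 1 + e^2 - 2 * e * fst p + 2 * e^2 * snd p > 0" if "p \<in> C2 h" for p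
  proof -
    obtain x y where p: "p = (x, y)" by (cases p)
    define D where "D = 1 + e^2 - 2 * e * x + 2 * e^2 * y"
    have Dp: "D > 0" using C2_facts(4)[OF h that[unfolded p]] unfolding D_def .
    have pd: "Phi2_den e p = - D" unfolding p Phi2_den_def D_def by simp
    have "cpt (Phi2 e p) = complex_of_real (1 / D) * (Complex (1 - e^2) (2 * e) * cpt p)"
      unfolding Phi2_def p prod.case pd[unfolded p] cpt_def using Dp
      by (simp add: complex_eq_iff field_simps)
    thus ?thesis using Dp pd unfolding p D_def by simp
  qed
    have f1: "\<forall>p\<in>C2 h. Phi2_den e p \<noteq> 0" using D by blast
    have f2: "homeomorphism (cpt ` C2 h) (sphere 0 1) sgn g" using hom unfolding S_def .
    have f3: "\<forall>p\<in>C2 h. sgn (cpt (Phi2 e p)) = exp (2 * pi * \<i> * complex_of_real (rho2 e)) * sgn (cpt p)"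
    proof
      fix p assume p: "p \<in> C2 h"
      define D where "D = 1 + e^2 - 2 * e * fst p + 2 * e^2 * snd p"
      have "1 / D > 0" using D[OF p] unfolding D_def by simp
      hence "sgn (complex_of_real (1 / D)) = 1" by (simp only: sgn_of_real) simp
      thus "sgn (cpt (Phi2 e p)) = exp (2 * pi * \<i> * complex_of_real (rho2 e)) * sgn (cpt p)"
        unfolding exp_rho using D[OF p] unfolding D_def[symmetric] by (simp add: sgn_mult)
    qed
    have f4: "\<forall>\<gamma>. path \<gamma> \<and> pathfinish \<gamma> = pathstart \<gamma> \<and> path_image \<gamma> \<subseteq> cpt ` C2 h
                \<longrightarrow> winding_number (sgn \<circ> \<gamma>) 0 = winding_number \<gamma> 0"
    proof (intro allI impI)
      fix \<gamma> :: "real \<Rightarrow> complex"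
      assume a: "path \<gamma> \<and> pathfinish \<gamma> = pathstart \<gamma> \<and> path_image \<gamma> \<subseteq> cpt ` C2 h"
      have "0 \<notin> path_image \<gamma>" using a Sf unfolding S_def by blast
      thus "winding_number (sgn \<circ> \<gamma>) 0 = winding_number \<gamma> 0" using a winding_sgn by blast
    qed
  show ?thesis using f1 f2 f3 f4 by blast
qed

theorem proposition16:
  fixes e :: real
  shows
    \<comment> \<open>(1) the map preserves the fibration by the conics C_{2,h}\<close>
    "(\<forall>h p. p \<in> C2 h \<and> Phi2_den e p \<noteq> 0 \<longrightarrow> Phi2 e p \<in> C2 h)
   \<and> (\<forall>h::real. h > 0 \<longrightarrow>
       \<comment> \<open>(2) P_{2,h} is a proper parametrization of C_{2,h} with inverse P2inv\<close>
       finite {t. P2_den h t = 0 \<or> P2inv_den h (P2 h t) = 0}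
     \<and> (\<forall>t. P2_den h t \<noteq> 0 \<longrightarrow> P2 h t \<in> C2 h)
     \<and> (\<forall>t. P2_den h t \<noteq> 0 \<and> P2inv_den h (P2 h t) \<noteq> 0 \<longrightarrow> P2inv h (P2 h t) = t)
     \<and> finite {p \<in> C2 h. P2inv_den h p = 0 \<or> P2_den h (P2inv h p) = 0}
     \<and> (\<forall>p \<in> C2 h. P2inv_den h p \<noteq> 0 \<and> P2_den h (P2inv h p) \<noteq> 0 \<longrightarrow> P2 h (P2inv h p) = p)
       \<comment> \<open>(3) conjugacy to the Moebius map: M_{2,h} = P^{-1} o Phi o P\<close>
     \<and> finite {t. P2_den h t = 0 \<or> Phi2_den e (P2 h t) = 0 \<or> P2inv_den h (Phi2 e (P2 h t)) = 0}
     \<and> (\<forall>t. P2_den h t \<noteq> 0 \<and> Phi2_den e (P2 h t) \<noteq> 0 \<and> P2inv_den h (Phi2 e (P2 h t)) \<noteq> 0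
            \<longrightarrow> P2inv h (Phi2 e (P2 h t)) = M2 e h t))
   \<and> (\<forall>h::real. 0 < h \<and> h < 1 \<longrightarrow>
       \<comment> \<open>(4) on each closed curve the map is (orientation-preservingly) conjugate
            to the rotation with rotation number rho2 e\<close>
       (\<forall>p \<in> C2 h. Phi2_den e p \<noteq> 0)
     \<and> (\<exists>\<psi> \<psi>'. homeomorphism (cpt ` C2 h) (sphere (0::complex) 1) \<psi> \<psi>'
          \<and> (\<forall>p \<in> C2 h. \<psi> (cpt (Phi2 e p)) = exp (2 * pi * \<i> * complex_of_real (rho2 e)) * \<psi> (cpt p))
          \<and> (\<forall>\<gamma>. path \<gamma> \<and> pathfinish \<gamma> = pathstart \<gamma> \<and> path_image \<gamma> \<subseteq> cpt ` C2 h
                \<longrightarrow> winding_number (\<psi> \<circ> \<gamma>) 0 = winding_number \<gamma> 0)))"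
proof -
  have A: "\<forall>h p. p \<in> C2 h \<and> Phi2_den e p \<noteq> 0 \<longrightarrow> Phi2 e p \<in> C2 h"
    using part1 by blast
  have B: "finite {t. P2_den h t = 0 \<or> P2inv_den h (P2 h t) = 0}
     \<and> (\<forall>t. P2_den h t \<noteq> 0 \<longrightarrow> P2 h t \<in> C2 h)
     \<and> (\<forall>t. P2_den h t \<noteq> 0 \<and> P2inv_den h (P2 h t) \<noteq> 0 \<longrightarrow> P2inv h (P2 h t) = t)
     \<and> finite {p \<in> C2 h. P2inv_den h p = 0 \<or> P2_den h (P2inv h p) = 0}
     \<and> (\<forall>p \<in> C2 h. P2inv_den h p \<noteq> 0 \<and> P2_den h (P2inv h p) \<noteq> 0 \<longrightarrow> P2 h (P2inv h p) = p)
     \<and> finite {t. P2_den h t = 0 \<or> Phi2_den e (P2 h t) = 0 \<or> P2inv_den h (Phi2 e (P2 h t)) = 0}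
     \<and> (\<forall>t. P2_den h t \<noteq> 0 \<and> Phi2_den e (P2 h t) \<noteq> 0 \<and> P2inv_den h (Phi2 e (P2 h t)) \<noteq> 0
            \<longrightarrow> P2inv h (Phi2 e (P2 h t)) = M2 e h t)" if h: "h > 0" for h
  proof -
    define s where "s = sqrt h"
    have s: "s > 0" using h unfolding s_def by simp
    have hs: "h = s^2" using h unfolding s_def by simp
    have fd: "finite {t. P2_den (s^2) t = 0}"
    proof -
      have "{t. P2_den (s^2) t = 0} = {t. -1 + 0 * t + (s^2 - 1) * t^2 = 0}"
        unfolding P2_den_def by simp
      thus ?thesis using quad_finite[of "-1" 0 "s^2 - 1"] by simp
    qed
    have b1: "finite {t. P2_den (s^2) t = 0 \<or> P2inv_den (s^2) (P2 (s^2) t) = 0}"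
    proof (rule finite_subset[OF _ fd])
      show "{t. P2_den (s^2) t = 0 \<or> P2inv_den (s^2) (P2 (s^2) t) = 0} \<subseteq> {t. P2_den (s^2) t = 0}"
      proof
        fix t assume t: "t \<in> {t. P2_den (s^2) t = 0 \<or> P2inv_den (s^2) (P2 (s^2) t) = 0}"
        show "t \<in> {t. P2_den (s^2) t = 0}"
        proof (rule ccontr)
          assume n: "t \<notin> {t. P2_den (s^2) t = 0}"
          hence "P2_den (s^2) t \<noteq> 0" by simp
          hence "P2inv_den (s^2) (P2 (s^2) t) \<noteq> 0" using P2inv_den_P2[OF s] s by simp
          thus False using t n by simp
        qed
      qed
    qed
    have b2: "\<forall>t. P2_den (s^2) t \<noteq> 0 \<longrightarrow> P2 (s^2) t \<in> C2 (s^2)" using P2_C2[OF s] by blast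
    have b3: "\<forall>t. P2_den (s^2) t \<noteq> 0 \<and> P2inv_den (s^2) (P2 (s^2) t) \<noteq> 0 \<longrightarrow> P2inv (s^2) (P2 (s^2) t) = t"
      using P2inv_P2[OF s] by blast
    have b4: "finite {p \<in> C2 (s^2). P2inv_den (s^2) p = 0 \<or> P2_den (s^2) (P2inv (s^2) p) = 0}"
      by (rule finite_subset[OF set4[OF s]]) simp
    have b5: "\<forall>p \<in> C2 (s^2). P2inv_den (s^2) p \<noteq> 0 \<and> P2_den (s^2) (P2inv (s^2) p) \<noteq> 0 \<longrightarrow> P2 (s^2) (P2inv (s^2) p) = p"
    proof (intro ballI impI)
      fix p assume "p \<in> C2 (s^2)" "P2inv_den (s^2) p \<noteq> 0 \<and> P2_den (s^2) (P2inv (s^2) p) \<noteq> 0"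
      thus "P2 (s^2) (P2inv (s^2) p) = p" using item5[OF s, of "fst p" "snd p"] by simp
    qed
    show ?thesis unfolding hs using b1 b2 b3 b4 b5 part3[OF s, of e] by blast
  qed
  show ?thesis using A B part4 by blast
qed

end
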